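(* Let $\mathcal{V}$ and $\mathcal{Q}$ be real Hilbert spaces, let $A:\mathcal{V}\times\mathcal{V}\to\mathbb{R}$ and $B:\mathcal{V}\times\mathcal{Q}\to\mathbb{R}$ be bounded bilinear forms, and let $\mathcal{V}_h\subset\mathcal{V}$, $\mathcal{Q}_h\subset\mathcal{Q}$ be finite-dimensional subspaces for which the discrete Babuška–Brezzi conditions hold (so that the discrete saddle point problems below are uniquely solvable for all right-hand sides, and the problem $A(w_h,v_h)=\ell(v_h)$ for all $v_h\in\ker\mathcal{B}_h$, $w_h\in\ker\mathcal{B}_h$, is uniquely solvable for every linear functional $\ell$ on $\ker\mathcal{B}_h$). Let $F\in\mathcal{V}'$, $G\in\mathcal{Q}'$. Let $(u_h,p_h)\in\mathcal{V}_h\times\mathcal{Q}_h$ satisfy $$A(u_h,v_h)+B(v_h,p_h)=F(v_h)\ \ \forall v_h\in\mathcal{V}_h,\qquad B(u_h,q_h)=G(q_h)\ \ \forall q_h\in\mathcal{Q}_h,$$ and for $r\in\mathcal{Q}$ let $(u_{h,r},p_{h,r})\in\mathcal{V}_h\times\mathcal{Q}_h$ satisfy $$A(u_{h,r},v_h)+B(v_h,p_{h,r})=F(v_h)+B(v_h,r)\ \ \forall v_h\in\mathcal{V}_h,\qquad B(u_{h,r},q_h)=G(q_h)\ \ \forall q_h\in\mathcal{Q}_h.$$ Then $$u_{h,r}=u_h\ \text{ for all } r\in\mathcal{Q}\quad\Longleftrightarrow\quad \ker\mathcal{B}_h\subseteq\ker\mathcal{B}.$$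
   Context: $\ker\mathcal{B}:=\{v\in\mathcal{V}: B(v,q)=0\ \forall q\in\mathcal{Q}\}$ and $\ker\mathcal{B}_h:=\{v_h\in\mathcal{V}_h: B(v_h,q_h)=0\ \forall q_h\in\mathcal{Q}_h\}$. The discrete Babuška–Brezzi conditions include the discrete inf-sup condition $\beta_h:=\inf_{q_h\in\mathcal{Q}_h}\sup_{v_h\in\mathcal{V}_h} B(v_h,q_h)/(\|v_h\|_{\mathcal{V}}\|q_h\|_{\mathcal{Q}})>0$ and an invertibility (coercivity/inf-sup) condition for $A$ on $\ker\mathcal{B}_h$. *)

theory Defs
  imports "HOL-Analysis.Analysis"
begin

definition ker_form :: "('v \<Rightarrow> 'q \<Rightarrow> real) \<Rightarrow> 'v set \<Rightarrow> 'q set \<Rightarrow> 'v set" where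
  "ker_form b X Y = {x \<in> X. \<forall>y\<in>Y. b x y = 0}"

definition fin_dim_subspace :: "'a::real_vector set \<Rightarrow> bool" where
  "fin_dim_subspace S \<longleftrightarrow> (\<exists>B. finite B \<and> S = span B)"

text \<open>Discrete inf-sup condition for b on X x Y (X, Y finite-dimensional, so the sup is
  attained):  exists beta > 0 such that for every nonzero y in Y,
  sup over nonzero x in X of  b x y / (norm x)  is at least  beta * norm y.\<close>
definition inf_sup :: "('v::real_normed_vector \<Rightarrow> 'q::real_normed_vector \<Rightarrow> real)
    \<Rightarrow> 'v set \<Rightarrow> 'q set \<Rightarrow> bool" where
  "inf_sup b X Y \<longleftrightarrow> (\<exists>\<beta>>0. \<forall>y\<in>Y - {0}. \<exists>x\<in>X - {0}. \<beta> * norm x * norm y \<le> b x y)"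

end

theory Submission
  imports Defs
begin

theorem lemma4p2:
  fixes A :: "'v::{real_inner,complete_space} \<Rightarrow> 'v \<Rightarrow> real"
    and B :: "'v \<Rightarrow> 'q::{real_inner,complete_space} \<Rightarrow> real"
    and Vh :: "'v set" and Qh :: "'q set"
    and F :: "'v \<Rightarrow> real" and G :: "'q \<Rightarrow> real"
    and uh :: 'v and ph :: 'q
    and uhr :: "'q \<Rightarrow> 'v" and phr :: "'q \<Rightarrow> 'q"
  assumes A_bdd: "bounded_bilinear A"
    and B_bdd: "bounded_bilinear B"
    and Vh: "fin_dim_subspace Vh" and Qh: "fin_dim_subspace Qh"
    and BB_B: "inf_sup (\<lambda>v q. B v q) Vh Qh"
    and BB_A: "inf_sup (\<lambda>v w. A w v) (ker_form B Vh Qh) (ker_form B Vh Qh)"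
    and F: "bounded_linear F" and G: "bounded_linear G"
    and uh_in: "uh \<in> Vh" and ph_in: "ph \<in> Qh"
    and eq1: "\<forall>v\<in>Vh. A uh v + B v ph = F v"
    and eq2: "\<forall>q\<in>Qh. B uh q = G q"
    and uhr_in: "\<forall>r. uhr r \<in> Vh" and phr_in: "\<forall>r. phr r \<in> Qh"
    and eqr1: "\<forall>r. \<forall>v\<in>Vh. A (uhr r) v + B v (phr r) = F v + B v r"
    and eqr2: "\<forall>r. \<forall>q\<in>Qh. B (uhr r) q = G q"
  shows "(\<forall>r. uhr r = uh) \<longleftrightarrow> ker_form B Vh Qh \<subseteq> ker_form B UNIV UNIV"
proof -
  obtain BV where BV: "Vh = span BV" using Vh unfolding fin_dim_subspace_def by blast
  obtain BQ where BQ: "Qh = span BQ" using Qh unfolding fin_dim_subspace_def by blast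
  have subV: "x - y \<in> Vh" if "x \<in> Vh" "y \<in> Vh" for x y
    using that BV by (simp add: span_diff)
  have subQ: "x - y \<in> Qh" if "x \<in> Qh" "y \<in> Qh" for x y
    using that BQ by (simp add: span_diff)
  obtain \<beta> where bpos: "\<beta> > 0" and bA: "\<forall>y\<in>ker_form B Vh Qh - {0}. \<exists>x\<in>ker_form B Vh Qh - {0}. \<beta> * norm x * norm y \<le> A y x"
    using BB_A unfolding inf_sup_def by blast
  have dK: "uhr r - uh \<in> ker_form B Vh Qh" for r
    using subV[OF spec[OF uhr_in, of r] uh_in] eqr2 eq2
    by (auto simp: ker_form_def bounded_bilinear.diff_left[OF B_bdd])
  have key: "A (uhr r - uh) v = B v r" if v: "v \<in> ker_form B Vh Qh" for r v
  proof -
    have vV: "v \<in> Vh" and vB: "\<forall>q\<in>Qh. B v q = 0" using v by (auto simp: ker_form_def)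
    have "B v (phr r - ph) = 0" using vB subQ[OF spec[OF phr_in, of r] ph_in] by blast
    hence "B v (phr r) = B v ph" by (simp add: bounded_bilinear.diff_right[OF B_bdd])
    moreover have "A (uhr r) v + B v (phr r) = F v + B v r" using eqr1 vV by blast
    moreover have "A uh v + B v ph = F v" using eq1 vV by blast
    ultimately show ?thesis by (simp add: bounded_bilinear.diff_left[OF A_bdd])
  qed
  show ?thesis
  proof
    assume H: "\<forall>r. uhr r = uh"
    show "ker_form B Vh Qh \<subseteq> ker_form B UNIV UNIV"
    proof
      fix v assume v: "v \<in> ker_form B Vh Qh"
      have "B v r = 0" for r using key[OF v, of r] H
        by (simp add: bounded_bilinear.zero_left[OF A_bdd])
      thus "v \<in> ker_form B UNIV UNIV" by (simp add: ker_form_def)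
    qed
  next
    assume H: "ker_form B Vh Qh \<subseteq> ker_form B UNIV UNIV"
    show "\<forall>r. uhr r = uh"
    proof
      fix r
      have z: "A (uhr r - uh) v = 0" if "v \<in> ker_form B Vh Qh" for v
        using key[OF that, of r] H that by (auto simp: ker_form_def)
      have "uhr r - uh = 0"
      proof (rule ccontr)
        assume "uhr r - uh \<noteq> 0"
        then obtain x where x: "x \<in> ker_form B Vh Qh" "x \<noteq> 0"
          and le: "\<beta> * norm x * norm (uhr r - uh) \<le> A (uhr r - uh) x"
          using bA dK[of r] by blast
        have "\<beta> * norm x * norm (uhr r - uh) > 0"
          using bpos x(2) \<open>uhr r - uh \<noteq> 0\<close> by simp
        with le z[OF x(1)] show False by simp
      qed
      thus "uhr r = uh" by simp
    qed
  qed
qed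

end
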